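(* Let $G$ be a layered graph over $\Sigma_{in}$ of depth $n$, $\epsilon>0$, and let $\mathsf{C}$ be an $\epsilon$-sensitive $(G,\Sigma_{out})$-code. For any $w\in\Sigma_{out}^n$, it holds that $|L_i(\mathsf{C},w,\epsilon)|\le1$ for at least $(1-\epsilon)n$ values of $i\le n$.
   Context: A layered graph over alphabet $\Sigma$ of depth $n$ is a directed graph whose vertices are partitioned into layers $0,\dots,n$, with exactly one vertex (the root) in layer $0$, and each vertex in layer $i<n$ has exactly $|\Sigma|$ out-edges to layer $i+1$ labeled by the distinct elements of $\Sigma$ (endpoints need not be distinct). A string $p\in\Sigma_{in}^i$ determines a unique root path ending at vertex $v(p)$ in layer $i$. A $(G,\Sigma_{out})$-code $\mathsf{C}$ assigns an element of $\Sigma_{out}$ to each edge; $\mathsf{C}(p)$ is the label string along $p$. Suffix distance: $\Delta_{sfx}(a,b)=\max_{0\le i\le m-1}\frac{\Delta(a[i+1:m],b[i+1:m])}{m-i}$, $\Delta$ Hamming distance. $L_i(\mathsf{C},w,\epsilon)=\{v(p):p\in\Sigma_{in}^i,\ \Delta_{sfx}(\mathsf{C}(p),w[1:i])<1-\epsilon\}$, $L(\mathsf{C},w,\epsilon)=\bigcup_{i=1}^nL_i(\mathsf{C},w,\epsilon)$. For $S\subseteq L(\mathsf{C},w,\epsilon)$, a prefix tree of $S$ is a union of paths $p(v)$ ($v\in S$) from the root to $v$, each with $\Delta_{sfx}(\mathsf{C}(p(v)),w[1:|p(v)|])<1-\epsilon$, that forms a rooted tree; $\mathcal{PT}(\mathsf{C},w,\epsilon)$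 is the set of all such prefix trees of subsets of $L(\mathsf{C},w,\epsilon)$. $agr(\mathsf{C}(H),w(H))$ is the number of edges of $H$ whose $\mathsf{C}$-label equals $w[i]$, $i$ the edge's depth. $\mathsf{C}$ is $\epsilon$-sensitive if for all $w\in\Sigma_{out}^n$ and all $PT\in\mathcal{PT}(\mathsf{C},w,\epsilon)$, $agr(\mathsf{C}(PT),w(PT))\le(1+\epsilon)n$. *)

theory Defs
  imports Complex_Main
begin

text \<open>An edge is identified
  by the pair (source vertex, input label), so parallel edges are allowed.\<close>

definition layered_graph ::
  "'a set \<Rightarrow> nat \<Rightarrow> 'v set \<Rightarrow> ('v \<Rightarrow> nat) \<Rightarrow> 'v \<Rightarrow> ('v \<Rightarrow> 'a \<Rightarrow> 'v) \<Rightarrow> bool" where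
  "layered_graph Sin n V lay r delta \<longleftrightarrow>
     r \<in> V \<and> lay r = 0 \<and>
     (\<forall>v\<in>V. lay v \<le> n) \<and>
     (\<forall>v\<in>V. lay v = 0 \<longrightarrow> v = r) \<and>
     (\<forall>v\<in>V. \<forall>a\<in>Sin. lay v < n \<longrightarrow> delta v a \<in> V \<and> lay (delta v a) = Suc (lay v))"

definition is_code ::
  "'a set \<Rightarrow> 'b set \<Rightarrow> nat \<Rightarrow> 'v set \<Rightarrow> ('v \<Rightarrow> nat) \<Rightarrow> ('v \<Rightarrow> 'a \<Rightarrow> 'b) \<Rightarrow> bool" where
  "is_code Sin Sout n V lay C \<longleftrightarrow> (\<forall>v\<in>V. \<forall>a\<in>Sin. lay v < n \<longrightarrow> C v a \<in> Sout)"

definition path_end :: "('v \<Rightarrow> 'a \<Rightarrow> 'v) \<Rightarrow> 'v \<Rightarrow> 'a list \<Rightarrow> 'v" where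
  "path_end delta v p = foldl delta v p"

fun code_word :: "('v \<Rightarrow> 'a \<Rightarrow> 'v) \<Rightarrow> ('v \<Rightarrow> 'a \<Rightarrow> 'b) \<Rightarrow> 'v \<Rightarrow> 'a list \<Rightarrow> 'b list" where
  "code_word delta C v [] = []"
| "code_word delta C v (a # p) = C v a # code_word delta C (delta v a) p"

fun path_edges :: "('v \<Rightarrow> 'a \<Rightarrow> 'v) \<Rightarrow> 'v \<Rightarrow> 'a list \<Rightarrow> ('v \<times> 'a) set" where
  "path_edges delta v [] = {}"
| "path_edges delta v (a # p) = insert (v, a) (path_edges delta (delta v a) p)"

definition hamming :: "'b list \<Rightarrow> 'b list \<Rightarrow> nat" where
  "hamming x y = card {j. j < length x \<and> j < length y \<and> x ! j \<noteq> y ! j}"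

text \<open>Suffix distance; the (unused) empty case is set to 0.\<close>
definition sfx_dist :: "'b list \<Rightarrow> 'b list \<Rightarrow> real" where
  "sfx_dist x y = (let m = length x in
     if m = 0 then 0
     else Max ((\<lambda>i. real (hamming (drop i x) (drop i y)) / real (m - i)) ` {0..<m}))"

definition L_layer ::
  "'a set \<Rightarrow> ('v \<Rightarrow> 'a \<Rightarrow> 'v) \<Rightarrow> 'v \<Rightarrow> ('v \<Rightarrow> 'a \<Rightarrow> 'b) \<Rightarrow> 'b list \<Rightarrow> real \<Rightarrow> nat \<Rightarrow> 'v set" where
  "L_layer Sin delta r C w eps i =
     {path_end delta r p | p. length p = i \<and> set p \<subseteq> Sin \<and>
        sfx_dist (code_word delta C r p) (take i w) < 1 - eps}"

definition L_all ::
  "'a set \<Rightarrow> nat \<Rightarrow> ('v \<Rightarrow> 'a \<Rightarrow> 'v) \<Rightarrow> 'v \<Rightarrow> ('v \<Rightarrow> 'a \<Rightarrow> 'b) \<Rightarrow> 'b list \<Rightarrow> real \<Rightarrow> 'v set" where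
  "L_all Sin n delta r C w eps = (\<Union>i\<in>{1..n}. L_layer Sin delta r C w eps i)"

text \<open>A set of edges forms a rooted tree (given that it is a union of root paths
  in a layered graph) iff no vertex has two distinct incoming edges.\<close>
definition tree_edges :: "('v \<Rightarrow> 'a \<Rightarrow> 'v) \<Rightarrow> ('v \<times> 'a) set \<Rightarrow> bool" where
  "tree_edges delta H \<longleftrightarrow>
     (\<forall>e1\<in>H. \<forall>e2\<in>H. delta (fst e1) (snd e1) = delta (fst e2) (snd e2) \<longrightarrow> e1 = e2)"

definition prefix_trees ::
  "'a set \<Rightarrow> nat \<Rightarrow> ('v \<Rightarrow> nat) \<Rightarrow> ('v \<Rightarrow> 'a \<Rightarrow> 'v) \<Rightarrow> 'v \<Rightarrow> ('v \<Rightarrow> 'a \<Rightarrow> 'b) \<Rightarrow>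
     'b list \<Rightarrow> real \<Rightarrow> ('v \<times> 'a) set set" where
  "prefix_trees Sin n lay delta r C w eps =
     {H. \<exists>S P. S \<subseteq> L_all Sin n delta r C w eps \<and>
        (\<forall>v\<in>S. set (P v) \<subseteq> Sin \<and> length (P v) = lay v \<and> path_end delta r (P v) = v \<and>
           sfx_dist (code_word delta C r (P v)) (take (length (P v)) w) < 1 - eps) \<and>
        H = (\<Union>v\<in>S. path_edges delta r (P v)) \<and>
        tree_edges delta H}"

text \<open>agr(C(H), w(H)): edges whose C-label equals w[i], i the edge's depth
  (an edge leaving layer k has depth k+1, i.e. is compared with w ! k).\<close>
definition agr :: "('v \<Rightarrow> nat) \<Rightarrow> ('v \<Rightarrow> 'a \<Rightarrow> 'b) \<Rightarrow> 'b list \<Rightarrow> ('v \<times> 'a) set \<Rightarrow> nat" where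
  "agr lay C w H = card {e \<in> H. C (fst e) (snd e) = w ! lay (fst e)}"

definition eps_sensitive ::
  "'a set \<Rightarrow> 'b set \<Rightarrow> nat \<Rightarrow> ('v \<Rightarrow> nat) \<Rightarrow> ('v \<Rightarrow> 'a \<Rightarrow> 'v) \<Rightarrow> 'v \<Rightarrow> ('v \<Rightarrow> 'a \<Rightarrow> 'b) \<Rightarrow> real \<Rightarrow> bool" where
  "eps_sensitive Sin Sout n lay delta r C eps \<longleftrightarrow>
     (\<forall>w. length w = n \<and> set w \<subseteq> Sout \<longrightarrow>
        (\<forall>H\<in>prefix_trees Sin n lay delta r C w eps. real (agr lay C w H) \<le> (1 + eps) * real n))"

end

theory Submission
  imports Defs
begin

lemma path_end_snoc: "path_end delta v (p @ [a]) = delta (path_end delta v p) a"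
  by (simp add: path_end_def)

lemma code_word_len: "length (code_word delta C v p) = length p"
  by (induction p arbitrary: v) auto

lemma code_word_nth: "t < length p \<Longrightarrow>
   code_word delta C v p ! t = C (path_end delta v (take t p)) (p ! t)"
proof (induction p arbitrary: v t)
  case Nil then show ?case by simp
next
  case (Cons a p)
  then show ?case by (cases t) (auto simp: path_end_def)
qed

lemma path_edges_iff: "e \<in> path_edges delta v p \<longleftrightarrow>
   (\<exists>t<length p. e = (path_end delta v (take t p), p ! t))"
proof (induction p arbitrary: v)
  case Nil then show ?case by simp
next
  case (Cons a p)
  show ?case
  proof
    assume "e \<in> path_edges delta v (a # p)"
    then consider "e = (v,a)" | "e \<in> path_edges delta (delta v a) p" by auto
    then show "\<exists>t<length (a # p). e = (path_end delta v (take t (a # p)), (a # p) ! t)"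
    proof cases
      case 1 then show ?thesis by (intro exI[of _ 0]) (auto simp: path_end_def)
    next
      case 2
      then obtain t where "t < length p" "e = (path_end delta (delta v a) (take t p), p ! t)"
        using Cons by auto
      then show ?thesis by (intro exI[of _ "Suc t"]) (auto simp: path_end_def)
    qed
  next
    assume "\<exists>t<length (a # p). e = (path_end delta v (take t (a # p)), (a # p) ! t)"
    then obtain t where t: "t < length (a # p)" "e = (path_end delta v (take t (a # p)), (a # p) ! t)" by blast
    show "e \<in> path_edges delta v (a # p)"
    proof (cases t)
      case 0 then show ?thesis using t by (auto simp: path_end_def)
    next
      case (Suc t')
      then have "e \<in> path_edges delta (delta v a) p" using t Cons[of "delta v a"]
        by (auto simp: path_end_def)
      then show ?thesis by simp
    qed
  qed
qed

lemma finite_path_edges: "finite (path_edges delta v p)"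
  by (induction p arbitrary: v) auto

locale lgs =
  fixes Sin :: "'a set" and n :: nat and V :: "'v set" and lay :: "'v \<Rightarrow> nat"
    and r :: 'v and delta :: "'v \<Rightarrow> 'a \<Rightarrow> 'v" and C :: "'v \<Rightarrow> 'a \<Rightarrow> 'b" and eps :: real
  assumes finSin: "finite Sin" and LG: "layered_graph Sin n V lay r delta"
    and epspos: "0 < eps" and epslt: "eps < 1"
begin

fun sl :: "'b list \<Rightarrow> 'v \<Rightarrow> nat \<Rightarrow> real \<Rightarrow> 'a list \<Rightarrow> real" where
  "sl w v k acc [] = acc"
| "sl w v k acc (a # p) = sl w (delta v a) (Suc k) (min acc 0 + ((if C v a = w ! k then 1 else 0) - eps)) p"

definition sfx :: "'b list \<Rightarrow> 'a list \<Rightarrow> real" where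
  "sfx w p = sl w r 0 0 p"

lemma sl_snoc: "sl w v k acc (p @ [a]) =
  min (sl w v k acc p) 0 + ((if C (path_end delta v p) a = w ! (k + length p) then 1 else 0) - eps)"
  by (induction p arbitrary: v k acc) (auto simp: path_end_def)

lemma sfx_snoc: "sfx w (p @ [a]) =
  min (sfx w p) 0 + ((if C (path_end delta r p) a = w ! length p then 1 else 0) - eps)"
  unfolding sfx_def by (simp add: sl_snoc)

definition ag :: "'b list \<Rightarrow> 'a list \<Rightarrow> nat \<Rightarrow> real" where
  "ag w p t = (if C (path_end delta r (take t p)) (p ! t) = w ! t then 1 else 0)"

definition sufval :: "'b list \<Rightarrow> 'a list \<Rightarrow> nat \<Rightarrow> real" where
  "sufval w p j = (\<Sum>t\<in>{j..<length p}. ag w p t - eps)"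

lemma ag_snoc1: "t < length p \<Longrightarrow> ag w (p @ [a]) t = ag w p t"
  by (simp add: ag_def nth_append)

lemma ag_snoc2: "ag w (p @ [a]) (length p) = (if C (path_end delta r p) a = w ! length p then 1 else 0)"
  by (simp add: ag_def)

lemma sufval_snoc: "j \<le> length p \<Longrightarrow> sufval w (p @ [a]) j =
   sufval w p j + ((if C (path_end delta r p) a = w ! length p then 1 else 0) - eps)"
proof -
  assume j: "j \<le> length p"
  have "sufval w (p @ [a]) j = (\<Sum>t\<in>{j..<Suc (length p)}. ag w (p @ [a]) t - eps)"
    by (simp add: sufval_def)
  also have "\<dots> = (\<Sum>t\<in>{j..<length p}. ag w (p @ [a]) t - eps) + (ag w (p @ [a]) (length p) - eps)"
    using j by simp
  also have "(\<Sum>t\<in>{j..<length p}. ag w (p @ [a]) t - eps) = sufval w p j"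
    unfolding sufval_def by (rule sum.cong) (auto simp: ag_snoc1)
  finally show ?thesis by (simp add: ag_snoc2)
qed

lemma sfx_min: "p \<noteq> [] \<Longrightarrow> (\<forall>j<length p. sfx w p \<le> sufval w p j) \<and> (\<exists>j<length p. sfx w p = sufval w p j)"
proof (induction p rule: rev_induct)
  case Nil then show ?case by simp
next
  case (snoc a p)
  define d where "d = (if C (path_end delta r p) a = w ! length p then 1 else 0) - eps"
  have s: "sfx w (p @ [a]) = min (sfx w p) 0 + d" by (simp add: sfx_snoc d_def)
  have sv: "\<And>j. j \<le> length p \<Longrightarrow> sufval w (p @ [a]) j = sufval w p j + d"
    by (simp add: sufval_snoc d_def)
  have svl: "sufval w p (length p) = 0" by (simp add: sufval_def)
  show ?case
  proof (cases "p = []")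
    case True
    then show ?thesis using s sv[of 0] by (simp add: sfx_def sufval_def)
  next
    case False
    with snoc obtain j0 where j0: "j0 < length p" "sfx w p = sufval w p j0"
      and le: "\<forall>j<length p. sfx w p \<le> sufval w p j" by auto
    have A: "\<forall>j<length (p @ [a]). sfx w (p @ [a]) \<le> sufval w (p @ [a]) j"
    proof (intro allI impI)
      fix j assume "j < length (p @ [a])"
      then have "j \<le> length p" by simp
      show "sfx w (p @ [a]) \<le> sufval w (p @ [a]) j"
      proof (cases "j = length p")
        case True then show ?thesis using s sv[of j] svl by simp
      next
        case False then have "j < length p" using \<open>j \<le> length p\<close> by simp
        then show ?thesis using s sv[of j] le by force
      qed
    qed
    have B: "\<exists>j<length (p @ [a]). sfx w (p @ [a]) = sufval w (p @ [a]) j"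
    proof (cases "sfx w p \<le> 0")
      case True then show ?thesis using s sv[of j0] j0 by (intro exI[of _ j0]) auto
    next
      case False then show ?thesis using s sv[of "length p"] svl by (intro exI[of _ "length p"]) auto
    qed
    from A B show ?thesis by blast
  qed
qed

lemma sfx_pos_iff: "p \<noteq> [] \<Longrightarrow> sfx w p > 0 \<longleftrightarrow> (\<forall>j<length p. sufval w p j > 0)"
  using sfx_min[of p w] by force

lemma ag01: "ag w p t = 0 \<or> ag w p t = 1" by (simp add: ag_def)

lemma hamming_eq: assumes "j < length p" "length p \<le> length w"
  shows "hamming (drop j (code_word delta C r p)) (drop j (take (length p) w))
         = card {t\<in>{j..<length p}. ag w p t = 0}"
proof -
  let ?m = "length p"
  have "{i. i < length (drop j (code_word delta C r p)) \<and> i < length (drop j (take ?m w)) \<and>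
          drop j (code_word delta C r p) ! i \<noteq> drop j (take ?m w) ! i}
        = {i. i < ?m - j \<and> ag w p (j + i) = 0}"
    using assms by (auto simp: code_word_len code_word_nth ag_def)
  moreover have "{t\<in>{j..<?m}. ag w p t = 0} = (\<lambda>i. j + i) ` {i. i < ?m - j \<and> ag w p (j + i) = 0}"
  proof
    show "{t \<in> {j..<?m}. ag w p t = 0} \<subseteq> (\<lambda>i. j + i) ` {i. i < ?m - j \<and> ag w p (j + i) = 0}"
    proof
      fix t assume "t \<in> {t \<in> {j..<?m}. ag w p t = 0}"
      then show "t \<in> (\<lambda>i. j + i) ` {i. i < ?m - j \<and> ag w p (j + i) = 0}"
        by (intro image_eqI[of _ _ "t - j"]) auto
    qed
  qed auto
  moreover have "card ((\<lambda>i. j + i) ` {i. i < ?m - j \<and> ag w p (j + i) = 0}) = card {i. i < ?m - j \<and> ag w p (j + i) = 0}"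
    by (rule card_image) (auto simp: inj_on_def)
  ultimately show ?thesis by (simp add: hamming_def)
qed

lemma sum_ag: "(\<Sum>t\<in>{j..<m}. ag w p t) = real (m - j) - real (card {t\<in>{j..<m}. ag w p t = 0})"
proof -
  have "(\<Sum>t\<in>{j..<m}. ag w p t) = (\<Sum>t\<in>{j..<m}. 1 - (if ag w p t = 0 then 1 else 0))"
    by (rule sum.cong) (use ag01 in auto)
  also have "\<dots> = real (m - j) - (\<Sum>t\<in>{j..<m}. (if ag w p t = 0 then 1 else 0))"
    by (simp add: sum_subtractf)
  also have "(\<Sum>t\<in>{j..<m}. (if ag w p t = 0 then 1 else 0::real)) = real (card {t\<in>{j..<m}. ag w p t = 0})"
    by (simp add: sum.If_cases Int_def)
  finally show ?thesis .
qed

lemma valid_iff: assumes "p \<noteq> []" "length p \<le> length w"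
  shows "sfx_dist (code_word delta C r p) (take (length p) w) < 1 - eps \<longleftrightarrow> sfx w p > 0"
proof -
  let ?m = "length p"
  let ?f = "\<lambda>i. real (hamming (drop i (code_word delta C r p)) (drop i (take ?m w))) / real (?m - i)"
  have "sfx_dist (code_word delta C r p) (take ?m w) = Max (?f ` {0..<?m})"
    using assms by (simp add: sfx_dist_def code_word_len Let_def)
  then have "sfx_dist (code_word delta C r p) (take ?m w) < 1 - eps \<longleftrightarrow> (\<forall>j<?m. ?f j < 1 - eps)"
    using assms by (simp add: atLeast0LessThan del: of_nat_diff) (subst Max_less_iff; auto)
  also have "\<dots> \<longleftrightarrow> (\<forall>j<?m. sufval w p j > 0)"
  proof (intro all_cong imp_cong refl)
    fix j assume j: "j < ?m"
    have h: "real (hamming (drop j (code_word delta C r p)) (drop j (take ?m w)))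
        = real (?m - j) - (\<Sum>t\<in>{j..<?m}. ag w p t)"
      using hamming_eq[OF j assms(2)] sum_ag[where j=j and m="length p" and w=w and p=p] by simp
    have sv: "sufval w p j = (\<Sum>t\<in>{j..<?m}. ag w p t) - eps * real (?m - j)"
      by (simp add: sufval_def sum_subtractf)
    have pos: "real (?m - j) > 0" using j by simp
    show "?f j < 1 - eps \<longleftrightarrow> sufval w p j > 0"
    proof -
      define D where "D = real (?m - j)"
      define S where "S = (\<Sum>t\<in>{j..<?m}. ag w p t)"
      have "?f j = (D - S) / D" unfolding D_def S_def h by simp
      moreover have "sufval w p j = S - eps * D" unfolding D_def S_def sv by simp
      moreover have "(D - S) / D < 1 - eps \<longleftrightarrow> D - S < (1 - eps) * D"
        using pos unfolding D_def by (simp add: divide_less_eq)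
      ultimately show ?thesis by (simp add: algebra_simps) linarith
    qed
  qed
  also have "\<dots> \<longleftrightarrow> sfx w p > 0" using sfx_pos_iff[OF assms(1)] by simp
  finally show ?thesis .
qed

lemma sl_mono: assumes "acc \<le> acc'"
  and "\<And>t. t < length p \<Longrightarrow> C (path_end delta v (take t p)) (p ! t) = w ! (k + t) \<Longrightarrow>
            C (path_end delta v (take t p)) (p ! t) = w' ! (k + t)"
  shows "sl w v k acc p \<le> sl w' v k acc' p"
  using assms
proof (induction p arbitrary: v k acc acc')
  case Nil then show ?case by simp
next
  case (Cons a p)
  have h0: "C v a = w ! k \<Longrightarrow> C v a = w' ! k"
    using Cons.prems(2)[of 0] by (simp add: path_end_def)
  have "min acc 0 + ((if C v a = w ! k then 1 else 0) - eps) \<le> min acc' 0 + ((if C v a = w' ! k then 1 else 0) - eps)"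
    using Cons.prems(1) h0 by (auto simp: min_def)
  moreover have "\<And>t. t < length p \<Longrightarrow> C (path_end delta (delta v a) (take t p)) (p ! t) = w ! (Suc k + t) \<Longrightarrow>
            C (path_end delta (delta v a) (take t p)) (p ! t) = w' ! (Suc k + t)"
    using Cons.prems(2) by (fastforce simp: path_end_def dest: spec[of _ "Suc _"])
  ultimately show ?case using Cons.IH by simp
qed

lemma sfx_mono: assumes "\<And>t. t < length p \<Longrightarrow> C (path_end delta r (take t p)) (p ! t) = w ! t \<Longrightarrow>
            C (path_end delta r (take t p)) (p ! t) = w' ! t"
  shows "sfx w p \<le> sfx w' p"
  unfolding sfx_def by (rule sl_mono) (use assms in auto)

lemma path_lay: "length p \<le> n \<Longrightarrow> set p \<subseteq> Sin \<Longrightarrow>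
   path_end delta r p \<in> V \<and> lay (path_end delta r p) = length p"
proof (induction p rule: rev_induct)
  case Nil then show ?case using LG by (simp add: layered_graph_def path_end_def)
next
  case (snoc a p)
  then have "path_end delta r p \<in> V \<and> lay (path_end delta r p) = length p" by simp
  with snoc.prems LG show ?case by (auto simp: layered_graph_def path_end_snoc)
qed

definition paths :: "nat \<Rightarrow> 'v \<Rightarrow> 'a list set" where
  "paths k x = {p. length p = k \<and> set p \<subseteq> Sin \<and> path_end delta r p = x}"

definition cand :: "nat \<Rightarrow> ('v \<Rightarrow> 'a list) \<Rightarrow> 'v \<Rightarrow> 'a list set" where
  "cand k f x = {f y @ [a] | y a. f y \<in> paths k y \<and> a \<in> Sin \<and> delta y a = x}"

primrec best :: "'b list \<Rightarrow> nat \<Rightarrow> 'v \<Rightarrow> 'a list" where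
  "best w 0 = (\<lambda>x. [])"
| "best w (Suc k) = (\<lambda>x. SOME q. q \<in> cand k (best w k) x \<and> (\<forall>q'\<in>cand k (best w k) x. sfx w q' \<le> sfx w q))"

lemma finite_max_ex: "finite A \<Longrightarrow> A \<noteq> {} \<Longrightarrow> \<exists>q\<in>A. \<forall>q'\<in>A. (f q' :: real) \<le> f q"
proof -
  assume A: "finite A" "A \<noteq> {}"
  then have "Max (f ` A) \<in> f ` A" by simp
  then obtain q where "q \<in> A" "f q = Max (f ` A)" by auto
  with A show ?thesis by (intro bexI[of _ q]) auto
qed

lemma best_inv: "paths k x \<noteq> {} \<Longrightarrow> best w k x \<in> paths k x \<and> (\<forall>p\<in>paths k x. sfx w p \<le> sfx w (best w k x))
   \<and> (\<forall>i\<le>k. take i (best w k x) = best w i (path_end delta r (take i (best w k x))))"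
proof (induction k arbitrary: x)
  case 0
  from 0 have "x = r" by (auto simp: paths_def path_end_def)
  then have "paths 0 x = {[]}" by (auto simp: paths_def path_end_def)
  then show ?case by (simp add: sfx_def)
next
  case (Suc k)
  let ?c = "cand k (best w k) x"
  from Suc.prems obtain p where p: "p \<in> paths (Suc k) x" by auto
  then obtain q a where qa: "p = q @ [a]" unfolding paths_def by (cases p rule: rev_exhaust) auto
  let ?y = "path_end delta r q"
  have "q \<in> paths k ?y" "a \<in> Sin" "delta ?y a = x" using p qa by (auto simp: paths_def path_end_snoc)
  then have "best w k ?y \<in> paths k ?y" using Suc.IH[of ?y] by auto
  then have "best w k ?y @ [a] \<in> ?c" using \<open>a \<in> Sin\<close> \<open>delta ?y a = x\<close> unfolding cand_def by blast
  then have ne: "?c \<noteq> {}" by blast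
  have "?c \<subseteq> {q. set q \<subseteq> Sin \<and> length q = Suc k}" unfolding cand_def paths_def by auto
  then have fin: "finite ?c" using finite_lists_length_eq[OF finSin] finite_subset by blast
  from finite_max_ex[OF fin ne, of "sfx w"] have ex: "\<exists>q. q \<in> ?c \<and> (\<forall>q'\<in>?c. sfx w q' \<le> sfx w q)" by blast
  have "best w (Suc k) x = (SOME q. q \<in> ?c \<and> (\<forall>q'\<in>?c. sfx w q' \<le> sfx w q))" by simp
  with someI_ex[OF ex] have B: "best w (Suc k) x \<in> ?c" "\<forall>q'\<in>?c. sfx w q' \<le> sfx w (best w (Suc k) x)"
    by simp_all
  then obtain y' a' where y': "best w (Suc k) x = best w k y' @ [a']" "best w k y' \<in> paths k y'" "a' \<in> Sin" "delta y' a' = x"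
    unfolding cand_def by blast
  have P: "best w (Suc k) x \<in> paths (Suc k) x" using y' by (auto simp: paths_def path_end_snoc)
  have O: "\<forall>p\<in>paths (Suc k) x. sfx w p \<le> sfx w (best w (Suc k) x)"
  proof
    fix p' assume p': "p' \<in> paths (Suc k) x"
    then obtain q' b where qb: "p' = q' @ [b]" unfolding paths_def by (cases p' rule: rev_exhaust) auto
    let ?z = "path_end delta r q'"
    have q': "q' \<in> paths k ?z" "b \<in> Sin" "delta ?z b = x" using p' qb by (auto simp: paths_def path_end_snoc)
    then have ne': "paths k ?z \<noteq> {}" by auto
    have bz: "best w k ?z \<in> paths k ?z" "sfx w q' \<le> sfx w (best w k ?z)" using Suc.IH[OF ne'] q'(1) by auto
    have lq: "length q' = k" "length (best w k ?z) = k" "path_end delta r (best w k ?z) = ?z"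
      using q'(1) bz(1) by (auto simp: paths_def)
    have "sfx w p' \<le> sfx w (best w k ?z @ [b])"
      unfolding qb sfx_snoc lq using bz(2) by (auto simp: min_def)
    also have "\<dots> \<le> sfx w (best w (Suc k) x)"
      using B(2) bz(1) q' unfolding cand_def by blast
    finally show "sfx w p' \<le> sfx w (best w (Suc k) x)" .
  qed
  have Cn: "\<forall>i\<le>Suc k. take i (best w (Suc k) x) = best w i (path_end delta r (take i (best w (Suc k) x)))"
  proof (intro allI impI)
    fix i assume i: "i \<le> Suc k"
    show "take i (best w (Suc k) x) = best w i (path_end delta r (take i (best w (Suc k) x)))"
    proof (cases "i = Suc k")
      case True
      then show ?thesis using P by (simp add: paths_def)
    next
      case False
      then have ik: "i \<le> k" using i by simp
      have lk: "length (best w k y') = k" using y'(2) by (simp add: paths_def)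
      have "take i (best w (Suc k) x) = take i (best w k y')" using y'(1) ik lk by simp
      moreover have "paths k y' \<noteq> {}" using y'(2) by auto
      ultimately show ?thesis using Suc.IH[of y'] ik by simp
    qed
  qed
  show ?case using P O Cn by blast
qed

lemma take_path_lay: "length p \<le> n \<Longrightarrow> set p \<subseteq> Sin \<Longrightarrow> t \<le> length p \<Longrightarrow>
   path_end delta r (take t p) \<in> V \<and> lay (path_end delta r (take t p)) = t"
  using path_lay[of "take t p"] by (auto dest: in_set_takeD)

lemma card_gt1: "\<not> card X \<le> 1 \<Longrightarrow> \<exists>u v. u \<in> X \<and> v \<in> X \<and> u \<noteq> v"
proof -
  assume a: "\<not> card X \<le> 1"
  then have "finite X" using card.infinite by force
  then show ?thesis using a card_le_Suc0_iff_eq[of X] by auto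
qed

lemma memL: assumes "1 \<le> i" "i \<le> length w"
  shows "v \<in> L_layer Sin delta r C w eps i \<longleftrightarrow>
    (\<exists>p. length p = i \<and> set p \<subseteq> Sin \<and> sfx w p > 0 \<and> v = path_end delta r p)"
proof -
  have "\<And>p. length p = i \<Longrightarrow> sfx_dist (code_word delta C r p) (take i w) < 1 - eps \<longleftrightarrow> sfx w p > 0"
  proof -
    fix p :: "'a list" assume "length p = i"
    then have "p \<noteq> []" using assms by auto
    with \<open>length p = i\<close> show "sfx_dist (code_word delta C r p) (take i w) < 1 - eps \<longleftrightarrow> sfx w p > 0"
      using valid_iff[of p w] assms by auto
  qed
  then show ?thesis unfolding L_layer_def by blast
qed

lemma last_agree: assumes "sfx w p > 0" "t < length p" "length p = Suc t"
  shows "C (path_end delta r (take t p)) (p ! t) = w ! t"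
proof -
  have p: "p = take t p @ [p ! t]" using assms take_Suc_conv_app_nth[of t p] by simp
  have "sfx w p = min (sfx w (take t p)) 0 +
      ((if C (path_end delta r (take t p)) (p ! t) = w ! length (take t p) then 1 else 0) - eps)"
    by (subst p, rule sfx_snoc)
  moreover have "min (sfx w (take t p)) 0 \<le> 0" by simp
  ultimately show ?thesis using assms epspos by (auto split: if_splits)
qed

lemma tree_gen:
  assumes "\<And>q i. q \<in> Q \<Longrightarrow> length q \<le> n \<and> set q \<subseteq> Sin"
    and "\<And>q i. q \<in> Q \<Longrightarrow> i \<le> length q \<Longrightarrow> take i q = cn i (path_end delta r (take i q))"
  shows "tree_edges delta (\<Union>q\<in>Q. path_edges delta r q)"
  unfolding tree_edges_def
proof (intro ballI impI)
  fix e1 e2 assume e1: "e1 \<in> (\<Union>q\<in>Q. path_edges delta r q)" and e2: "e2 \<in> (\<Union>q\<in>Q. path_edges delta r q)"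
    and eq: "delta (fst e1) (snd e1) = delta (fst e2) (snd e2)"
  from e1 obtain q1 t1 where q1: "q1 \<in> Q" "t1 < length q1" "e1 = (path_end delta r (take t1 q1), q1 ! t1)"
    using path_edges_iff[of e1 delta r] by blast
  from e2 obtain q2 t2 where q2: "q2 \<in> Q" "t2 < length q2" "e2 = (path_end delta r (take t2 q2), q2 ! t2)"
    using path_edges_iff[of e2 delta r] by blast
  have tg: "delta (path_end delta r (take t q)) (q ! t) = path_end delta r (take (Suc t) q)" if "t < length q" for t q
    using that by (simp add: take_Suc_conv_app_nth path_end_snoc)
  define z where "z = path_end delta r (take (Suc t1) q1)"
  have z1: "z = delta (fst e1) (snd e1)" using q1 tg by (simp add: z_def)
  have z2: "z = path_end delta r (take (Suc t2) q2)" using eq z1 q2 tg by simp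
  have l1: "lay z = Suc t1" using take_path_lay[of q1 "Suc t1"] assms(1)[OF q1(1)] q1(2) z_def by simp
  have l2: "lay z = Suc t2" using take_path_lay[of q2 "Suc t2"] assms(1)[OF q2(1)] q2(2) z2 by simp
  have tt: "t1 = t2" using l1 l2 by simp
  have "take (Suc t1) q1 = cn (Suc t1) z" using assms(2)[OF q1(1), of "Suc t1"] q1(2) z_def by simp
  moreover have "take (Suc t1) q2 = cn (Suc t1) z" using assms(2)[OF q2(1), of "Suc t2"] q2(2) z2 tt by simp
  ultimately have tq: "take (Suc t1) q1 = take (Suc t1) q2" by simp
  have "take t1 q1 = take t1 q2"
    using arg_cong[OF tq, of "take t1"] by simp
  moreover have "q1 ! t1 = q2 ! t1"
    using arg_cong[OF tq, of "\<lambda>l. l ! t1"] by simp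
  ultimately show "e1 = e2" using q1(3) q2(3) tt by simp
qed

lemma count_lemma:
  fixes g :: "'e \<Rightarrow> nat"
  assumes "finite A" and "\<And>t. t < N \<Longrightarrow> c t \<le> card {e\<in>A. g e = t}"
  shows "(\<Sum>t<N. c t) \<le> card A"
proof -
  have "(\<Sum>t<N. c t) \<le> (\<Sum>t<N. card {e\<in>A. g e = t})" using assms(2) by (intro sum_mono) auto
  also have "\<dots> = card (\<Union>t<N. {e\<in>A. g e = t})"
    by (rule card_UN_disjoint[symmetric]) (use assms(1) in auto)
  also have "\<dots> \<le> card A" using assms(1) by (intro card_mono) auto
  finally show ?thesis .
qed

lemma sum_shift_card:
  assumes "I \<subseteq> {1..N}"
  shows "(\<Sum>t<N. (1::nat) + (if Suc t \<in> I then 1 else 0)) = N + card I"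
proof -
  have "(\<Sum>t<N. (1::nat) + (if Suc t \<in> I then 1 else 0)) = N + (\<Sum>t<N. (if Suc t \<in> I then 1 else 0))"
    by (subst sum.distrib) simp
  also have "(\<Sum>t<N. (if Suc t \<in> I then 1 else 0::nat)) = card {t\<in>{..<N}. Suc t \<in> I}"
    by (simp add: sum.If_cases Int_def)
  finally have ss: "(\<Sum>t<N. (1::nat) + (if Suc t \<in> I then 1 else 0)) = N + card {t\<in>{..<N}. Suc t \<in> I}" .
  have Ieq: "I = Suc ` {t\<in>{..<N}. Suc t \<in> I}"
  proof
    show "I \<subseteq> Suc ` {t \<in> {..<N}. Suc t \<in> I}"
    proof
      fix i assume "i \<in> I"
      then have "i \<in> {1..N}" using assms by auto
      then show "i \<in> Suc ` {t \<in> {..<N}. Suc t \<in> I}" using \<open>i \<in> I\<close>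
        by (intro image_eqI[of _ _ "i - 1"]) auto
    qed
  qed auto
  have cI: "card I = card {t\<in>{..<N}. Suc t \<in> I}" by (subst Ieq, rule card_image) simp
  show ?thesis using ss cI by simp
qed

lemma main:
  fixes Sout :: "'b set" and w :: "'b list"
  assumes Sne: "Sin \<noteq> {}" and code: "is_code Sin Sout n V lay C"
    and sens: "eps_sensitive Sin Sout n lay delta r C eps"
    and wl: "length w = n" and ws: "set w \<subseteq> Sout"
  shows "(1 - eps) * real n \<le> real (card {i \<in> {1..n}. card (L_layer Sin delta r C w eps i) \<le> 1})"
proof (rule ccontr)
  assume neg: "\<not> ?thesis"
  define Lw where "Lw i = L_layer Sin delta r C w eps i" for i
  define Good where "Good = {i \<in> {1..n}. card (Lw i) \<le> 1}"
  define Ibad where "Ibad = {i \<in> {1..n}. \<not> card (Lw i) \<le> 1}"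
  have "Good \<union> Ibad = {1..n}" "Good \<inter> Ibad = {}" unfolding Good_def Ibad_def by auto
  moreover have "finite Good" "finite Ibad" unfolding Good_def Ibad_def by auto
  ultimately have "card Good + card Ibad = n" using card_Un_disjoint[of Good Ibad] by simp
  with neg have Ibig: "real (card Ibad) > eps * real n" unfolding Good_def Lw_def by (simp add: algebra_simps)
  moreover have "eps * real n \<ge> 0" using epspos by simp
  ultimately have "Ibad \<noteq> {}" by (auto intro: ccontr)
  define NE where "NE = {i \<in> {1..n}. Lw i \<noteq> {}}"
  have "Ibad \<subseteq> NE" unfolding Ibad_def NE_def by auto
  with \<open>Ibad \<noteq> {}\<close> have NEne: "NE \<noteq> {}" by auto
  have NEfin: "finite NE" unfolding NE_def by auto
  define m where "m = Max NE"
  have mNE: "m \<in> NE" unfolding m_def using NEne NEfin by simp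
  have mge: "\<And>i. i \<in> NE \<Longrightarrow> i \<le> m" unfolding m_def using NEfin by simp
  have m1: "1 \<le> m" "m \<le> n" using mNE unfolding NE_def by auto
  obtain vs where vs: "vs \<in> Lw m" using mNE unfolding NE_def by auto
  obtain a0 where a0: "a0 \<in> Sin" using Sne by auto
  define B where "B v = best w (lay v) v" for v
  define Lall where "Lall = L_all Sin n delta r C w eps"
  have Lall_iff: "v \<in> Lall \<longleftrightarrow> (\<exists>i\<in>{1..n}. v \<in> Lw i)" for v
    unfolding Lall_def L_all_def Lw_def by auto
  have Bfacts: "lay v = i \<and> B v \<in> paths i v \<and> sfx w (B v) > 0 \<and>
      (\<forall>j\<le>i. take j (B v) = best w j (path_end delta r (take j (B v))))"
    if "i \<in> {1..n}" "v \<in> Lw i" for i v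
  proof -
    from that obtain p where p: "length p = i" "set p \<subseteq> Sin" "sfx w p > 0" "v = path_end delta r p"
      using memL[of i w v] wl unfolding Lw_def by auto
    have lv: "lay v = i" using path_lay[of p] p that by auto
    have pp: "p \<in> paths i v" using p by (simp add: paths_def)
    then have "paths i v \<noteq> {}" by auto
    from best_inv[OF this, of w] pp p(3) show ?thesis unfolding B_def lv by force
  qed
  have LallBC: "1 \<le> lay v \<and> lay v \<le> m \<and> B v \<in> paths (lay v) v \<and> sfx w (B v) > 0 \<and>
      (\<forall>j\<le>lay v. take j (B v) = best w j (path_end delta r (take j (B v))))" if "v \<in> Lall" for v
  proof -
    from that obtain i where i: "i \<in> {1..n}" "v \<in> Lw i" using Lall_iff by auto
    then have "i \<in> NE" unfolding NE_def by auto
    then have "i \<le> m" by (rule mge)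
    with Bfacts[OF i] i show ?thesis by auto
  qed
  have LallB: "1 \<le> lay v \<and> lay v \<le> m \<and> length (B v) = lay v \<and> set (B v) \<subseteq> Sin \<and>
      path_end delta r (B v) = v \<and> sfx w (B v) > 0" if "v \<in> Lall" for v
    using LallBC[OF that] unfolding paths_def by blast
  have LallC: "\<And>j. j \<le> lay v \<Longrightarrow> take j (B v) = best w j (path_end delta r (take j (B v)))" if "v \<in> Lall" for v
    using LallBC[OF that] by blast
  have vsL: "vs \<in> Lall" using vs m1 Lall_iff by auto
  have m1n: "m \<in> {1..n}" using m1 by auto
  have layvs: "lay vs = m" using conjunct1[OF Bfacts[OF m1n vs]] .
  define Z where "Z = B vs @ replicate (n - m) a0"
  have lenBvs: "length (B vs) = m" using LallB[OF vsL] layvs by simp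
  have Zlen: "length Z = n" using lenBvs m1 by (simp add: Z_def)
  have Zset: "set Z \<subseteq> Sin" using LallB[OF vsL] a0 by (auto simp: Z_def)
  have takeZ: "take j Z = take j (B vs)" if "j \<le> m" for j using that lenBvs by (simp add: Z_def)
  have Zm: "take m Z = B vs" using takeZ[of m] lenBvs by simp
  define T where "T = (\<Union>v\<in>Lall. path_edges delta r (B v))"
  have Tedge: "\<exists>v\<in>Lall. \<exists>t<lay v. e = (path_end delta r (take t (B v)), B v ! t) \<and> lay (fst e) = t \<and> t < m"
    if "e \<in> T" for e
  proof -
    from that obtain v where v: "v \<in> Lall" "e \<in> path_edges delta r (B v)" unfolding T_def by blast
    from LallB[OF v(1)] have lb: "length (B v) = lay v" "set (B v) \<subseteq> Sin" "lay v \<le> m"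
      by auto
    from v(2) obtain t where t: "t < length (B v)" "e = (path_end delta r (take t (B v)), B v ! t)"
      using path_edges_iff[of e delta r "B v"] by blast
    have "lay (path_end delta r (take t (B v))) = t"
      using take_path_lay[of "B v" t] lb t m1 by simp
    then have "\<exists>t<lay v. e = (path_end delta r (take t (B v)), B v ! t) \<and> lay (fst e) = t \<and> t < m"
      using t lb by (intro exI[of _ t]) auto
    then show ?thesis using v(1) by blast
  qed
  define agrT where "agrT t = (\<exists>e\<in>T. lay (fst e) = t \<and> C (fst e) (snd e) = w ! t)" for t
  define w' where "w' = map (\<lambda>t. if agrT t then w ! t else C (path_end delta r (take t Z)) (Z ! t)) [0..<n]"
  have w'len: "length w' = n" by (simp add: w'_def)
  have w'nth: "w' ! t = (if agrT t then w ! t else C (path_end delta r (take t Z)) (Z ! t))" if "t < n" for t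
    using that by (simp add: w'_def)
  have agrT_m: "\<not> agrT t" if "m \<le> t" for t
  proof
    assume "agrT t"
    then obtain e where e: "e \<in> T" "lay (fst e) = t" unfolding agrT_def by blast
    from Tedge[OF e(1)] e(2) have "t < m" by force
    with that show False by simp
  qed
  have Bvalid': "sfx w' (B v) > 0" if "v \<in> Lall" for v
  proof -
    from LallB[OF that] have lb: "length (B v) = lay v" "lay v \<le> m" "sfx w (B v) > 0"
      by auto
    have "sfx w (B v) \<le> sfx w' (B v)"
    proof (rule sfx_mono)
      fix t assume t: "t < length (B v)" and eq: "C (path_end delta r (take t (B v))) (B v ! t) = w ! t"
      have "(path_end delta r (take t (B v)), B v ! t) \<in> T"
        unfolding T_def using that t path_edges_iff[of _ delta r "B v"] by blast
      moreover have "lay (path_end delta r (take t (B v))) = t"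
        using take_path_lay[of "B v" t] LallB[OF that] t m1 by auto
      ultimately have "agrT t" using eq unfolding agrT_def by (intro bexI[of _ "(path_end delta r (take t (B v)), B v ! t)"]) simp_all
      moreover have "t < n" using t lb m1 by simp
      ultimately show "C (path_end delta r (take t (B v))) (B v ! t) = w' ! t" using eq w'nth by simp
    qed
    with lb show ?thesis by simp
  qed
  have Zvalid: "sfx w' (take (m + d) Z) > 0" if "m + d \<le> n" for d
    using that
  proof (induction d)
    case 0 then show ?case using Bvalid'[OF vsL] Zm by simp
  next
    case (Suc d)
    let ?k = "m + d"
    have k: "?k < n" using Suc.prems by simp
    have tk: "take (Suc ?k) Z = take ?k Z @ [Z ! ?k]" using k Zlen by (simp add: take_Suc_conv_app_nth)
    have lt: "length (take ?k Z) = ?k" using k Zlen by simp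
    have "w' ! ?k = C (path_end delta r (take ?k Z)) (Z ! ?k)" using w'nth[OF k] agrT_m[of ?k] by simp
    then have "sfx w' (take (Suc ?k) Z) = min (sfx w' (take ?k Z)) 0 + (1 - eps)"
      unfolding tk sfx_snoc lt by simp
    moreover have "sfx w' (take ?k Z) > 0" using Suc by simp
    ultimately show ?case using epslt by simp
  qed
  have Zval: "sfx w' Z > 0" using Zvalid[of "n - m"] m1 Zlen by simp
  have n1: "1 \<le> n" using m1 by simp
  define zend where "zend = path_end delta r Z"
  have layz: "zend \<in> V \<and> lay zend = n" using path_lay[of Z] Zlen Zset by (simp add: zend_def)
  define S' where "S' = insert zend Lall"
  define P' where "P' v = (if v = zend then Z else B v)" for v
  define H' where "H' = (\<Union>v\<in>S'. path_edges delta r (P' v))"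
  have P'props: "set (P' v) \<subseteq> Sin \<and> length (P' v) = lay v \<and> path_end delta r (P' v) = v \<and>
      sfx w' (P' v) > 0 \<and> 1 \<le> lay v \<and> lay v \<le> n" if "v \<in> S'" for v
  proof (cases "v = zend")
    case True then show ?thesis using Zset Zlen layz Zval n1 by (simp add: P'_def zend_def)
  next
    case False
    then have "v \<in> Lall" using that by (simp add: S'_def)
    then show ?thesis using LallB[of v] Bvalid'[of v] False m1 by (simp add: P'_def)
  qed
  have valid': "sfx_dist (code_word delta C r (P' v)) (take (length (P' v)) w') < 1 - eps" if "v \<in> S'" for v
  proof -
    from P'props[OF that] have "P' v \<noteq> []" "length (P' v) \<le> length w'" "sfx w' (P' v) > 0"
      using w'len by auto
    then show ?thesis using valid_iff[of "P' v" w'] by simp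
  qed
  have S'L: "S' \<subseteq> L_all Sin n delta r C w' eps"
  proof
    fix v assume v: "v \<in> S'"
    from P'props[OF v] have "v \<in> L_layer Sin delta r C w' eps (lay v)"
      using memL[of "lay v" w' v] w'len by auto
    then show "v \<in> L_all Sin n delta r C w' eps" unfolding L_all_def using P'props[OF v] by auto
  qed
  define cn where "cn i x = (if i \<le> m then best w i x else take i Z)" for i x
  have cons: "take i q = cn i (path_end delta r (take i q))" if "q \<in> P' ` S'" "i \<le> length q" for q i
  proof -
    from that obtain v where v: "v \<in> S'" "q = P' v" by auto
    show ?thesis
    proof (cases "v = zend")
      case True
      then have q: "q = Z" using v by (simp add: P'_def)
      show ?thesis
      proof (cases "i \<le> m")
        case True
        then have "take i (B vs) = best w i (path_end delta r (take i (B vs)))"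
          using LallC[OF vsL, of i] layvs by simp
        then show ?thesis using True q takeZ[OF True] by (simp add: cn_def)
      next
        case False then show ?thesis using q by (simp add: cn_def)
      qed
    next
      case False
      then have vL: "v \<in> Lall" and q: "q = B v" using v by (auto simp: S'_def P'_def)
      have "i \<le> lay v" "lay v \<le> m" using that(2) LallB[OF vL] q by auto
      then show ?thesis using LallC[OF vL, of i] q by (simp add: cn_def)
    qed
  qed
  have H'eq: "H' = (\<Union>q\<in>P' ` S'. path_edges delta r q)" unfolding H'_def by auto
  have tree: "tree_edges delta H'"
    unfolding H'eq
  proof (rule tree_gen[where cn = cn])
    fix q assume "q \<in> P' ` S'"
    then show "length q \<le> n \<and> set q \<subseteq> Sin" using P'props by auto
  next
    fix q i assume "q \<in> P' ` S'" "i \<le> length q"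
    then show "take i q = cn i (path_end delta r (take i q))" by (rule cons)
  qed
  have PT: "H' \<in> prefix_trees Sin n lay delta r C w' eps"
    unfolding prefix_trees_def mem_Collect_eq
  proof (intro exI[of _ S'] exI[of _ P'] conjI)
    show "\<forall>v\<in>S'. set (P' v) \<subseteq> Sin \<and> length (P' v) = lay v \<and> path_end delta r (P' v) = v \<and>
           sfx_dist (code_word delta C r (P' v)) (take (length (P' v)) w') < 1 - eps"
      using P'props valid' by blast
  qed (use S'L tree H'_def in auto)
  have w'set: "set w' \<subseteq> Sout"
  proof
    fix x assume "x \<in> set w'"
    then obtain t where t: "t < n" "x = w' ! t" using w'len by (auto simp: in_set_conv_nth)
    show "x \<in> Sout"
    proof (cases "agrT t")
      case True
      have "w ! t \<in> set w" using t wl by simp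
      then show ?thesis using True t w'nth ws by auto
    next
      case False
      have "path_end delta r (take t Z) \<in> V \<and> lay (path_end delta r (take t Z)) = t"
        using take_path_lay[of Z t] Zlen Zset t by simp
      moreover have "Z ! t \<in> Sin" using Zset Zlen t by auto
      ultimately have "C (path_end delta r (take t Z)) (Z ! t) \<in> Sout"
        using code t unfolding is_code_def by auto
      then show ?thesis using False t w'nth by simp
    qed
  qed
  have agr_le: "real (agr lay C w' H') \<le> (1 + eps) * real n"
    using sens w'len w'set PT unfolding eps_sensitive_def by blast
  define A where "A = {e\<in>H'. C (fst e) (snd e) = w' ! lay (fst e)}"
  have agrA: "agr lay C w' H' = card A" unfolding agr_def A_def by simp
  have "H' \<subseteq> (\<Union>q\<in>{q. set q \<subseteq> Sin \<and> length q \<le> n}. path_edges delta r q)"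
    unfolding H'_def using P'props by fastforce
  moreover have "finite (\<Union>q\<in>{q. set q \<subseteq> Sin \<and> length q \<le> n}. path_edges delta r q)"
    using finite_lists_length_le[OF finSin, of n] finite_path_edges by (intro finite_UN_I) auto
  ultimately have finH: "finite H'" by (rule finite_subset)
  then have finA: "finite A" unfolding A_def by simp
  have TH: "e \<in> H'" if "v \<in> Lall" "e \<in> path_edges delta r (B v)" for v e
  proof (cases "v = zend")
    case False then show ?thesis using that unfolding H'_def S'_def P'_def by auto
  next
    case True
    then have "lay v = n" using layz by simp
    with LallB[OF that(1)] have mn: "m = n" using m1 by simp
    then have Zeq: "Z = B vs" by (simp add: Z_def)
    then have "zend = vs" using LallB[OF vsL] by (simp add: zend_def)
    then have "B v = Z" using True Zeq by simp
    then show ?thesis using that True unfolding H'_def S'_def P'_def by auto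
  qed
  have edgeB: "(path_end delta r (take t (B u)), B u ! t) \<in> A \<and> lay (path_end delta r (take t (B u))) = t
      \<and> delta (path_end delta r (take t (B u))) (B u ! t) = u"
    if "u \<in> Lw (Suc t)" "Suc t \<le> n" for u t
  proof -
    have st: "Suc t \<in> {1..n}" using that by simp
    then have uL: "u \<in> Lall" using that Lall_iff by blast
    have lu: "lay u = Suc t" using conjunct1[OF Bfacts[OF st that(1)]] .
    have Bl: "length (B u) = Suc t" "set (B u) \<subseteq> Sin" "path_end delta r (B u) = u" "sfx w (B u) > 0"
      using LallB[OF uL] lu by auto
    let ?e = "(path_end delta r (take t (B u)), B u ! t)"
    have eP: "?e \<in> path_edges delta r (B u)" using path_edges_iff[of ?e delta r "B u"] Bl by auto
    then have eT: "?e \<in> T" unfolding T_def using uL by blast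
    have le: "lay (path_end delta r (take t (B u))) = t"
      using take_path_lay[of "B u" t] Bl that by simp
    have ag: "C (path_end delta r (take t (B u))) (B u ! t) = w ! t"
      using last_agree[of w "B u" t] Bl by simp
    have "agrT t" unfolding agrT_def using eT le ag by force
    then have "w' ! t = w ! t" using w'nth that by simp
    then have "?e \<in> A" unfolding A_def using TH[OF uL eP] le ag by simp
    moreover have "delta (path_end delta r (take t (B u))) (B u ! t) = u"
      using Bl by (simp add: take_Suc_conv_app_nth[symmetric] path_end_snoc[symmetric])
    ultimately show ?thesis using le by simp
  qed
  have cnt: "(1::nat) + (if Suc t \<in> Ibad then 1 else 0) \<le> card {e\<in>A. lay (fst e) = t}" if "t < n" for t
  proof (cases "Suc t \<in> Ibad")
    case True
    then have "\<not> card (Lw (Suc t)) \<le> 1" unfolding Ibad_def by simp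
    then obtain u v where uv: "u \<in> Lw (Suc t)" "v \<in> Lw (Suc t)" "u \<noteq> v" using card_gt1 by blast
    let ?eu = "(path_end delta r (take t (B u)), B u ! t)"
    let ?ev = "(path_end delta r (take t (B v)), B v ! t)"
    have eu: "?eu \<in> A" "lay (fst ?eu) = t" "delta (fst ?eu) (snd ?eu) = u" using edgeB[OF uv(1)] that by auto
    have ev: "?ev \<in> A" "lay (fst ?ev) = t" "delta (fst ?ev) (snd ?ev) = v" using edgeB[OF uv(2)] that by auto
    have ne: "?eu \<noteq> ?ev" using eu(3) ev(3) uv(3) by metis
    have "{?eu, ?ev} \<subseteq> {e\<in>A. lay (fst e) = t}" using eu ev by auto
    then have "card {?eu, ?ev} \<le> card {e\<in>A. lay (fst e) = t}" using finA by (intro card_mono) auto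
    then show ?thesis using True ne by simp
  next
    case False
    have "\<exists>e\<in>A. lay (fst e) = t"
    proof (cases "agrT t")
      case True
      then obtain e v where e: "v \<in> Lall" "e \<in> path_edges delta r (B v)" "lay (fst e) = t" "C (fst e) (snd e) = w ! t"
        unfolding agrT_def T_def by blast
      have "w' ! t = w ! t" using True w'nth that by simp
      then have "e \<in> A" using TH[OF e(1,2)] e unfolding A_def by simp
      then show ?thesis using e(3) by blast
    next
      case False
      let ?e = "(path_end delta r (take t Z), Z ! t)"
      have "?e \<in> path_edges delta r Z" using path_edges_iff[of ?e delta r Z] Zlen that by auto
      then have eH: "?e \<in> H'" unfolding H'_def S'_def P'_def by auto
      have le: "lay (path_end delta r (take t Z)) = t" using take_path_lay[of Z t] Zlen Zset that by simp
      have "w' ! t = C (path_end delta r (take t Z)) (Z ! t)" using False w'nth that by simp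
      then have "?e \<in> A" unfolding A_def using eH le by simp
      then show ?thesis using le by (intro bexI[of _ ?e]) auto
    qed
    then obtain e where "e \<in> A" "lay (fst e) = t" by blast
    then have "card {e} \<le> card {e\<in>A. lay (fst e) = t}" using finA by (intro card_mono) auto
    then show ?thesis using False by simp
  qed
  have "(\<Sum>t<n. (1::nat) + (if Suc t \<in> Ibad then 1 else 0)) \<le> card A"
    by (rule count_lemma[OF finA, where g = "\<lambda>e. lay (fst e)"]) (use cnt in simp)
  moreover have "Ibad \<subseteq> {1..n}" unfolding Ibad_def by auto
  ultimately have "n + card Ibad \<le> card A" using sum_shift_card by simp
  then have "real n + real (card Ibad) \<le> real (agr lay C w' H')" using agrA by simp
  with agr_le Ibig show False by (simp add: algebra_simps)
qed

end

theorem lemma5p12: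
  fixes Sin :: "'a set" and Sout :: "'b set" and n :: nat
    and V :: "'v set" and lay :: "'v \<Rightarrow> nat" and r :: 'v and delta :: "'v \<Rightarrow> 'a \<Rightarrow> 'v"
    and C :: "'v \<Rightarrow> 'a \<Rightarrow> 'b" and eps :: real and w :: "'b list"
  assumes "finite Sin" and "Sin \<noteq> {}"
    and "layered_graph Sin n V lay r delta"
    and "is_code Sin Sout n V lay C"
    and "eps > 0"
    and "eps_sensitive Sin Sout n lay delta r C eps"
    and "length w = n" and "set w \<subseteq> Sout"
  shows "(1 - eps) * real n \<le> real (card {i \<in> {1..n}. card (L_layer Sin delta r C w eps i) \<le> 1})"
proof (cases "eps < 1")
  case False
  then have "(1 - eps) * real n \<le> 0" by (simp add: mult_nonpos_nonneg)
  then show ?thesis by (rule order_trans) simp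
next
  case True
  interpret lgs Sin n V lay r delta C eps
    using assms True by unfold_locales auto
  show ?thesis using main[OF assms(2,4,6,7,8)] .
qed

end
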